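(* Let $P=\{x\in\mathbb R^3:(a^i)^\intercal x\le b_i,\ 1\le i\le n\}$ be a 3-dimensional polytope centrally symmetric with respect to the origin, where $b_i>0$ and each inequality defines a facet $F_i$ with supporting hyperplane $H_i=\{x:(a^i)^\intercal x=b_i\}$. For indices $i_1,\dots,i_6$ let $A_{i_1,\dots,i_6}\in\mathbb R^{6\times 9}$ be the matrix with rows $((a^{i_1})^\intercal,0,0)$, $(0,(a^{i_2})^\intercal,0)$, $(0,0,(a^{i_3})^\intercal)$, $(0,(a^{i_4})^\intercal,-(a^{i_4})^\intercal)$, $(-(a^{i_5})^\intercal,0,(a^{i_5})^\intercal)$, $((a^{i_6})^\intercal,-(a^{i_6})^\intercal,0)$, and let $\mathcal S$ be the set of matrices $W=(w^1,w^2,w^3)\in\mathbb R^{3\times3}$ with $A_{i_1,\dots,i_6}(w^1;w^2;w^3)=(b_{i_1},\dots,b_{i_6})^\intercal$. If $\mathrm{rank}(A_{i_1,\dots,i_6})<6$, then the function $f(W)=|\det W|$ on $\mathcal S$ has no local minimum $W\in\mathcal S$ with $f(W)>0$. *)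

theory Defs
  imports "HOL-Analysis.Analysis"
begin

definition polyP :: "nat \<Rightarrow> (nat \<Rightarrow> real^3) \<Rightarrow> (nat \<Rightarrow> real) \<Rightarrow> (real^3) set" where
  "polyP n a b = {x. \<forall>i\<in>{1..n}. a i \<bullet> x \<le> b i}"

text \<open>The 9 columns are indexed by pairs (k,j) :: 3 x 3,
  k the block (1,2,3) and j the coordinate inside the block; the rows are indexed by type 6
  with row 6 written as the element 0 of type 6.\<close>
definition coefA :: "(nat \<Rightarrow> real^3) \<Rightarrow> nat \<Rightarrow> nat \<Rightarrow> nat \<Rightarrow> nat \<Rightarrow> nat \<Rightarrow> nat \<Rightarrow> real^(3\<times>3)^6" where
  "coefA a i1 i2 i3 i4 i5 i6 = (\<chi> r. \<chi> p. let (k,j) = p in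
     if r = 1 then (if k = 1 then a i1 $ j else 0)
     else if r = 2 then (if k = 2 then a i2 $ j else 0)
     else if r = 3 then (if k = 3 then a i3 $ j else 0)
     else if r = 4 then (if k = 2 then a i4 $ j else if k = 3 then - (a i4 $ j) else 0)
     else if r = 5 then (if k = 1 then - (a i5 $ j) else if k = 3 then a i5 $ j else 0)
     else (if k = 1 then a i6 $ j else if k = 2 then - (a i6 $ j) else 0))"

definition rhsb :: "(nat \<Rightarrow> real) \<Rightarrow> nat \<Rightarrow> nat \<Rightarrow> nat \<Rightarrow> nat \<Rightarrow> nat \<Rightarrow> nat \<Rightarrow> real^6" where
  "rhsb b i1 i2 i3 i4 i5 i6 = (\<chi> r.
     if r = 1 then b i1 else if r = 2 then b i2 else if r = 3 then b i3
     else if r = 4 then b i4 else if r = 5 then b i5 else b i6)"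

definition stackW :: "real^3^3 \<Rightarrow> real^(3\<times>3)" where
  "stackW W = (\<chi> p. W $ snd p $ fst p)"

definition solS :: "(nat \<Rightarrow> real^3) \<Rightarrow> (nat \<Rightarrow> real) \<Rightarrow> nat \<Rightarrow> nat \<Rightarrow> nat \<Rightarrow> nat \<Rightarrow> nat \<Rightarrow> nat \<Rightarrow> (real^3^3) set" where
  "solS a b i1 i2 i3 i4 i5 i6 =
     {W. coefA a i1 i2 i3 i4 i5 i6 *v stackW W = rhsb b i1 i2 i3 i4 i5 i6}"

end

theory Submission
  imports Defs
begin

definition psi :: "real^6 \<Rightarrow> real^3^3" where
  "psi x = vector [vector [x$1, x$4, x$5], vector [x$4, x$2, x$6], vector [x$5, x$6, x$3]]"

lemma psi_lin: "linear psi"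
  by (rule linearI) (simp_all add: psi_def vec_eq_iff forall_3)

lemma forall_6: "(\<forall>i::6. P i) \<longleftrightarrow> P 1 \<and> P 2 \<and> P 3 \<and> P 4 \<and> P 5 \<and> P 6"
proof -
  have U: "(UNIV::6 set) = {1,2,3,4,5,6}"
  proof (rule card_subset_eq[symmetric])
    show "card {1,2,3,4,5,6::6} = card (UNIV::6 set)" by simp
  qed simp_all
  show ?thesis
  proof
    assume "P 1 \<and> P 2 \<and> P 3 \<and> P 4 \<and> P 5 \<and> P 6"
    then show "\<forall>i. P i" by (metis U UNIV_I empty_iff insert_iff)
  qed simp
qed

lemma stack_lin: "linear stackW"
  by (rule linearI) (simp_all add: stackW_def vec_eq_iff)

lemma lmul_lin: "linear (\<lambda>M::real^3^3. W ** M)"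
  by (rule linearI) (simp_all add: matrix_add_ldistrib matrix_scalar_ac scalar_matrix_assoc)

lemma det_expand:
  fixes M :: "real^3^3"
  shows "det (mat 1 + t *\<^sub>R M) = 1 + (M$1$1+M$2$2+M$3$3) * t
     + (M$1$1*M$2$2 + M$1$1*M$3$3 + M$2$2*M$3$3 - M$1$2*M$2$1 - M$1$3*M$3$1 - M$2$3*M$3$2) * t^2
     + det M * t^3"
  apply (simp add: det_3 mat_def)
  apply (simp add: algebra_simps power2_eq_square power3_eq_cube)
  done

lemma cubic_dec1:
  fixes c1 c2 c3 d :: real
  assumes c1: "c1 \<noteq> 0" and d: "d > 0"
  shows "\<exists>t. t \<noteq> 0 \<and> abs (t) < d \<and> abs (1 + c1*t + c2*t^2 + c3*t^3) < 1"
proof -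
  define u where "u = abs (c1)"
  define B where "B = abs (c2) + abs (c3) + 1"
  define s where "s = min (d/2) (min 1 (min (u/(2*B)) (1/(2*u))))"
  have u: "u > 0" using c1 u_def by simp
  have B: "B > 0" using B_def by simp
  have s0: "s > 0" using u B d by (simp add: s_def)
  have s1: "s \<le> 1" by (simp add: s_def)
  have sd: "s < d" using d by (simp add: s_def)
  have sB: "s * B \<le> u/2"
  proof -
    have "s \<le> u/(2*B)" by (simp add: s_def)
    then show ?thesis using B by (simp add: field_simps)
  qed
  have su: "s * u \<le> 1/2"
  proof -
    have "s \<le> 1/(2*u)" by (simp add: s_def)
    then show ?thesis using u by (simp add: field_simps)
  qed
  define t where "t = - sgn c1 * s"
  have ct: "c1 * t = - u * s" using c1 by (simp add: t_def u_def sgn_if)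
  have at: "abs (t) = s" using c1 s0 by (simp add: t_def abs_mult sgn_if)
  have r: "abs (c2*t^2 + c3*t^3) \<le> B * s^2 - s^2"
  proof -
    have "abs (c2*t^2 + c3*t^3) \<le> abs (c2)* s^2 + abs (c3)* s^3"
    proof -
      have "abs (c2* t^2 + c3* t^3) \<le> abs (c2* t^2) + abs (c3* t^3)" by (rule abs_triangle_ineq)
      also have "\<dots> = abs (c2)* s^2 + abs (c3)* s^3" using at by (simp add: abs_mult power_abs)
      finally show ?thesis .
    qed
    also have "abs (c3)* s^3 \<le> abs (c3)* s^2"
    proof -
      have "s^3 \<le> s^2" using s0 s1 by (simp add: power_decreasing)
      then show ?thesis by (simp add: mult_left_mono)
    qed
    finally show ?thesis by (simp add: B_def algebra_simps)
  qed
  have "B * s^2 = (s*B) * s" by (simp add: power2_eq_square)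
  also have "\<dots> \<le> u/2 * s" using sB s0 by (intro mult_right_mono) auto
  moreover have "s^2 > 0" using s0 by simp
  ultimately have r2: "abs (c2*t^2 + c3*t^3) < u * s / 2" using r by linarith
  have p: "1 + c1*t + c2*t^2 + c3*t^3 = 1 - u* s + (c2*t^2 + c3*t^3)" using ct by simp
  have "abs (1 + c1*t + c2*t^2 + c3*t^3) < 1"
  proof -
    define P where "P = u * s"
    define X where "X = c2* t^2 + c3* t^3"
    have "abs X < P/2" "P \<le> 1/2" "0 < P" using r2 su u s0 by (simp_all add: P_def X_def mult.commute)
    then have "abs (1 - P + X) < 1" by linarith
    then show ?thesis unfolding p by (simp add: P_def X_def)
  qed
  moreover have "t \<noteq> 0" using at s0 by auto
  ultimately show ?thesis using at sd by blast
qed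

lemma cubic_dec2:
  fixes c2 c3 d :: real
  assumes c2: "c2 < 0" and d: "d > 0"
  shows "\<exists>t. t \<noteq> 0 \<and> abs (t) < d \<and> abs (1 + c2*t^2 + c3*t^3) < 1"
proof -
  define q where "q = - c2"
  define s where "s = min (d/2) (min 1 (min (q/(2*(abs (c3)+1))) (1/(2*q+2))))"
  have q: "q > 0" using c2 q_def by simp
  have s0: "s > 0" using q d by (simp add: s_def)
  have s1: "s \<le> 1" by (simp add: s_def)
  have sd: "s < d" using d by (simp add: s_def)
  have sB: "s * (abs (c3)+1) \<le> q/2"
  proof -
    have "s \<le> q/(2*(abs (c3)+1))" by (simp add: s_def)
    then show ?thesis by (simp add: field_simps)
  qed
  have sq: "s * q \<le> 1/2"
  proof -
    have "s \<le> 1/(2*q+2)" by (simp add: s_def)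
    then have "s * (2*q+2) \<le> 1" using q by (simp add: field_simps)
    then show ?thesis using s0 by (simp add: algebra_simps)
  qed
  have r: "abs (c3* s^3) < q/2 * s^2"
  proof -
    have "abs (c3* s^3) = (abs (c3) * s) * s^2" using s0 by (simp add: abs_mult power3_eq_cube power2_eq_square)
    also have "\<dots> < (q/2) * s^2"
    proof (rule mult_strict_right_mono)
      show "abs (c3) * s < q/2" using sB s0 by (simp add: algebra_simps)
    qed (use s0 in simp)
    finally show ?thesis .
  qed
  have qs2: "q * s^2 \<le> 1/2"
  proof -
    have "q * s^2 = (s*q) * s" by (simp add: power2_eq_square)
    also have "\<dots> \<le> 1/2 * 1" using sq s1 s0 q by (intro mult_mono) auto
    finally show ?thesis by simp
  qed
  have pos: "q * s^2 > 0" using q s0 by simp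
  have "abs (1 + c2* s^2 + c3* s^3) < 1"
  proof -
    define P where "P = c2 * s^2"
    define X where "X = c3 * s^3"
    have e: "q/2 * s^2 = - P/2" by (simp add: P_def q_def)
    have "abs X < - P/2" "- P \<le> 1/2" "0 < - P"
      using r qs2 pos e by (simp_all add: P_def X_def q_def)
    then have "abs (1 + P + X) < 1" by linarith
    then show ?thesis by (simp add: P_def X_def)
  qed
  then show ?thesis using s0 sd by (intro exI[of _ s]) auto
qed

lemma psi_nz:
  fixes x :: "real^6"
  assumes "x \<noteq> 0"
  defines "M \<equiv> psi x"
  shows "(M$1$1+M$2$2+M$3$3) \<noteq> 0 \<or>
     (M$1$1*M$2$2 + M$1$1*M$3$3 + M$2$2*M$3$3 - M$1$2*M$2$1 - M$1$3*M$3$1 - M$2$3*M$3$2) < 0"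
proof (cases "(M$1$1+M$2$2+M$3$3) \<noteq> 0")
  case True then show ?thesis by simp
next
  case False
  note h = False
  have ex: "x$1 \<noteq> 0 \<or> x$2 \<noteq> 0 \<or> x$3 \<noteq> 0 \<or> x$4 \<noteq> 0 \<or> x$5 \<noteq> 0 \<or> x$6 \<noteq> 0"
    using assms(1) by (auto simp: vec_eq_iff forall_6)
  have h0: "x$1 + x$2 + x$3 = 0" using h by (simp add: M_def psi_def)
  have id: "2 * (M$1$1*M$2$2 + M$1$1*M$3$3 + M$2$2*M$3$3 - M$1$2*M$2$1 - M$1$3*M$3$1 - M$2$3*M$3$2)
     = (x$1 + x$2 + x$3)^2 - ((x$1)^2 + (x$2)^2 + (x$3)^2 + 2*(x$4)^2 + 2*(x$5)^2 + 2*(x$6)^2)"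
    by (simp add: M_def psi_def power2_eq_square algebra_simps)
  have "(x$1)^2 + (x$2)^2 + (x$3)^2 + 2*(x$4)^2 + 2*(x$5)^2 + 2*(x$6)^2 > 0"
  proof -
    have p: "\<And>k. x$k \<noteq> 0 \<Longrightarrow> 0 < (x$k)^2" by simp
    have q: "\<And>k. 0 \<le> (x$k)^2" by simp
    note qs = q[of 1] q[of 2] q[of 3] q[of 4] q[of 5] q[of 6]
    from ex consider "x$1 \<noteq> 0" | "x$2 \<noteq> 0" | "x$3 \<noteq> 0" | "x$4 \<noteq> 0" | "x$5 \<noteq> 0" | "x$6 \<noteq> 0"
      by blast
    then show ?thesis
    proof cases
      case 1 from p[OF this] qs show ?thesis by linarith
    next
      case 2 from p[OF this] qs show ?thesis by linarith
    next
      case 3 from p[OF this] qs show ?thesis by linarith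
    next
      case 4 from p[OF this] qs show ?thesis by linarith
    next
      case 5 from p[OF this] qs show ?thesis by linarith
    next
      case 6 from p[OF this] qs show ?thesis by linarith
    qed
  qed
  then show ?thesis using id h0 by simp
qed

theorem lemma4p1:
  fixes n :: nat and a :: "nat \<Rightarrow> real^3" and b :: "nat \<Rightarrow> real"
    and i1 i2 i3 i4 i5 i6 :: nat
  assumes "polytope (polyP n a b)"
    and "aff_dim (polyP n a b) = 3"
    and "\<forall>x\<in>polyP n a b. - x \<in> polyP n a b"
    and "\<forall>i\<in>{1..n}. b i > 0"
    and "\<forall>i\<in>{1..n}. (polyP n a b \<inter> {x. a i \<bullet> x = b i}) facet_of (polyP n a b)"
    and "{i1, i2, i3, i4, i5, i6} \<subseteq> {1..n}"
    and "rank (coefA a i1 i2 i3 i4 i5 i6) < 6"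
  shows "\<not> (\<exists>W\<in>solS a b i1 i2 i3 i4 i5 i6. \<bar>det W\<bar> > 0 \<and>
            (\<exists>e>0. \<forall>V\<in>solS a b i1 i2 i3 i4 i5 i6. dist V W < e \<longrightarrow> \<bar>det W\<bar> \<le> \<bar>det V\<bar>))"
proof
  assume "\<exists>W\<in>solS a b i1 i2 i3 i4 i5 i6. \<bar>det W\<bar> > 0 \<and>
            (\<exists>e>0. \<forall>V\<in>solS a b i1 i2 i3 i4 i5 i6. dist V W < e \<longrightarrow> \<bar>det W\<bar> \<le> \<bar>det V\<bar>)"
  then obtain W e where W: "W \<in> solS a b i1 i2 i3 i4 i5 i6" and dW: "\<bar>det W\<bar> > 0" and e: "e > 0"
    and loc: "\<forall>V\<in>solS a b i1 i2 i3 i4 i5 i6. dist V W < e \<longrightarrow> \<bar>det W\<bar> \<le> \<bar>det V\<bar>"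
    by blast
  define A where "A = coefA a i1 i2 i3 i4 i5 i6"
  define h where "h = (\<lambda>V. A *v stackW V)"
  have lh: "linear h" unfolding h_def
    using linear_compose[OF stack_lin matrix_vector_mul_linear[of A]] by (simp add: o_def)
  define g where "g = (\<lambda>x. h (W ** psi x))"
  have lg: "linear g" unfolding g_def
    using linear_compose[OF linear_compose[OF psi_lin lmul_lin[of W]] lh] by (simp add: o_def)
  have "\<not> inj g"
  proof
    assume ig: "inj g"
    have "dim (g ` UNIV) = dim (UNIV :: (real^6) set)"
      by (rule dim_image_eq[OF lg]) (use ig in \<open>auto simp: inj_on_def inj_def\<close>)
    then have d6: "dim (g ` UNIV) = 6" by simp
    have "g ` UNIV \<subseteq> range (\<lambda>x. A *v x)" by (auto simp: g_def h_def)
    then have "dim (g ` UNIV) \<le> rank A" by (simp add: rank_dim_range dim_subset)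
    then show False using d6 assms(7) A_def by simp
  qed
  then obtain x where x0: "x \<noteq> 0" and gx: "g x = 0"
    using linear_injective_0[OF lg] by blast
  define M where "M = psi x"
  define c1 where "c1 = M$1$1+M$2$2+M$3$3"
  define c2 where "c2 = M$1$1*M$2$2 + M$1$1*M$3$3 + M$2$2*M$3$3 - M$1$2*M$2$1 - M$1$3*M$3$1 - M$2$3*M$3$2"
  define c3 where "c3 = det M"
  have cc: "c1 \<noteq> 0 \<or> c2 < 0" using psi_nz[OF x0] by (simp add: c1_def c2_def M_def)
  define N where "N = norm (W ** M)"
  have Npos: "N + 1 > 0" using norm_ge_zero[of "W ** M"] unfolding N_def by linarith
  have dpos: "e / (N + 1) > 0" using e Npos by simp
  obtain t where t0: "t \<noteq> 0" and td: "\<bar>t\<bar> < e / (N + 1)"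
    and tp: "\<bar>1 + c1*t + c2*t^2 + c3*t^3\<bar> < 1"
  proof (cases "c1 \<noteq> 0")
    case True
    then show ?thesis using cubic_dec1[OF True dpos, of c2 c3] that by blast
  next
    case False
    then have "c2 < 0" "c1 = 0" using cc by auto
    then show ?thesis using cubic_dec2[OF \<open>c2 < 0\<close> dpos, of c3] that by auto
  qed
  define V where "V = W + t *\<^sub>R (W ** M)"
  have "h V = h W + t *\<^sub>R g x"
    by (simp add: V_def g_def M_def linear_add[OF lh] linear_scale[OF lh])
  then have "h V = h W" using gx by simp
  then have VS: "V \<in> solS a b i1 i2 i3 i4 i5 i6" using W by (simp add: solS_def h_def A_def)
  have "dist V W = \<bar>t\<bar> * N" by (simp add: V_def N_def dist_norm)
  also have "\<dots> \<le> \<bar>t\<bar> * (N + 1)" by (simp add: mult_left_mono)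
  also have "\<dots> < e / (N + 1) * (N + 1)"
    using td Npos by (intro mult_strict_right_mono) auto
  also have "\<dots> = e" using Npos by simp
  finally have dV: "dist V W < e" .
  have "V = W ** (mat 1 + t *\<^sub>R M)"
    by (simp add: V_def matrix_add_ldistrib matrix_scalar_ac scalar_matrix_assoc)
  then have "det V = det W * det (mat 1 + t *\<^sub>R M)" by (simp add: det_mul)
  also have "det (mat 1 + t *\<^sub>R M) = 1 + c1*t + c2*t^2 + c3*t^3"
    by (simp add: det_expand c1_def c2_def c3_def)
  finally have "\<bar>det V\<bar> = \<bar>det W\<bar> * \<bar>1 + c1*t + c2*t^2 + c3*t^3\<bar>" by (simp add: abs_mult)
  also have "\<dots> < \<bar>det W\<bar>" using tp dW by simp
  finally show False using loc VS dV by fastforce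
qed

end
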